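(* Let $\chi_1,\dots,\chi_n$ be Bernoulli random variables such that $\sum_{i=1}^n\Pr(\chi_i=1)=1$ and the events $\{\chi_i=1\}$ are mutually exclusive. Let $B_1,\dots,B_n$ be independent Bernoulli random variables with $\Pr(B_i=1)=\Pr(\chi_i=1)$. Let $P$ be a Poisson random variable with parameter $1$ independent of the $\chi_i$. Then for all nonnegative numbers $\alpha_1,\dots,\alpha_n$, $$\sum_{i=1}^n\alpha_i\chi_i\le_{cx}\sum_{i=1}^n\alpha_iB_i\le_{cx}P\sum_{i=1}^n\alpha_i\chi_i .$$
   Context: $X\le_{cx}Y$ means $\mathbb{E}\varphi(X)\le\mathbb{E}\varphi(Y)$ for every convex $\varphi:\mathbb{R}\to\mathbb{R}$ for which both expectations exist. *)

theory Defs
  imports "HOL-Probability.Probability"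
begin

text \<open>Convex order: X (on probability space M) is below Y (on probability space N)
  in the convex order if E phi(X) <= E phi(Y) for every convex phi : R -> R
  for which both expectations exist (read as: both phi o X and phi o Y integrable).\<close>
definition cx_le :: "'a measure \<Rightarrow> ('a \<Rightarrow> real) \<Rightarrow> 'b measure \<Rightarrow> ('b \<Rightarrow> real) \<Rightarrow> bool" where
  "cx_le M X N Y \<longleftrightarrow>
     (\<forall>\<phi> :: real \<Rightarrow> real. convex_on UNIV \<phi> \<longrightarrow>
        integrable M (\<lambda>x. \<phi> (X x)) \<longrightarrow> integrable N (\<lambda>y. \<phi> (Y y)) \<longrightarrow>
        (\<integral>x. \<phi> (X x) \<partial>M) \<le> (\<integral>y. \<phi> (Y y) \<partial>N))"

end

theory Submission
  imports Defs
begin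

definition cc :: "real \<Rightarrow> nat \<Rightarrow> real" where
  "cc l t = (if t = 0 then 0 else exp (-l) * l ^ (t - 1) / fact t)"
definition poi :: "real \<Rightarrow> nat \<Rightarrow> real" where
  "poi q m = exp (-q) * q ^ m / fact m"

lemma t1: fixes l q :: real and k r :: nat
  shows "exp (-l) * l ^ k / fact (Suc k) * (exp (-q) * q ^ (r - k) / fact (r - k)) * real (Suc k) / real (Suc r)
   = exp (-l) * exp (-q) / fact (Suc r) * (fact r / (fact k * fact (r - k)) * l ^ k * q ^ (r - k))"
  by (simp add: fact_Suc divide_simps del: of_nat_Suc)

lemma t3: fixes l q :: real and t r :: nat
  shows "exp (-l) * exp (-q) * l ^ t * q ^ (Suc (r - t)) * real (Suc (r - t)) / (fact t * fact (Suc (r - t)) * real (Suc r))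
   = q * (exp (-l) * exp (-q) / fact (Suc r)) * (fact r / (fact t * fact (r - t)) * l ^ t * q ^ (r - t))"
  by (simp add: fact_Suc divide_simps del: of_nat_Suc)

lemma coefA: "(\<Sum>t\<le>s. cc l t * poi q (s - t) * real t / real s) = cc (l + q) s"
proof (cases s)
  case 0 then show ?thesis by (simp add: cc_def)
next
  case (Suc r)
  have "(\<Sum>t\<le>s. cc l t * poi q (s - t) * real t / real s)
      = (\<Sum>k\<le>r. cc l (Suc k) * poi q (s - Suc k) * real (Suc k) / real s)"
    unfolding Suc by (subst sum.atMost_Suc_shift) (simp add: cc_def)
  also have "\<dots> = (\<Sum>k\<le>r. exp (-(l+q)) / fact (Suc r) * (of_nat (r choose k) * l ^ k * q ^ (r - k)))"
  proof (intro sum.cong refl)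
    fix k assume "k \<in> {..r}"
    then have k: "k \<le> r" by simp
    have e1: "s - Suc k = r - k" using Suc by simp
    have C: "real (r choose k) = fact r / (fact k * fact (r - k))" using binomial_fact[OF k, where 'a=real] by simp
    have ex: "exp (-(l+q)) = exp (-l) * exp (-q)" by (simp add: exp_add[symmetric])
    show "cc l (Suc k) * poi q (s - Suc k) * real (Suc k) / real s
       = exp (-(l+q)) / fact (Suc r) * (of_nat (r choose k) * l ^ k * q ^ (r - k))"
      unfolding e1 ex C Suc using t1[of l k q r] by (simp add: cc_def poi_def)
  qed
  also have "\<dots> = exp (-(l+q)) / fact (Suc r) * (l + q) ^ r"
    by (simp add: binomial_ring sum_distrib_left)
  also have "\<dots> = cc (l + q) s" using Suc by (simp add: cc_def)
  finally show ?thesis .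
qed

lemma coefB:
  assumes "s \<ge> 1"
  shows "exp (-l) * poi q s + l * (\<Sum>t\<le>s. cc l t * poi q (s - t) * real (s - t) / real s)
       = q * cc (l + q) s"
proof -
  obtain r where s: "s = Suc r" using assms by (cases s) auto
  define h where "h t = exp (-(l+q)) * l ^ t * q ^ (s - t) * real (s - t) / (fact t * fact (s - t) * real s)" for t
  have "exp (-l) * poi q s + l * (\<Sum>t\<le>s. cc l t * poi q (s - t) * real (s - t) / real s)
      = (\<Sum>t\<le>s. (if t = 0 then exp (-l) * poi q s else 0) + l * (cc l t * poi q (s - t) * real (s - t) / real s))"
    by (simp add: sum.distrib sum_distrib_left)
  also have "\<dots> = (\<Sum>t\<le>s. h t)"
  proof (intro sum.cong refl)
    fix t assume "t \<in> {..s}"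
    have ex: "exp (-(l+q)) = exp (-l) * exp (-q)" by (simp add: exp_add[symmetric])
    have ex2: "exp (- l - q) = exp (-l) * exp (-q)" by (simp add: exp_add[symmetric])
    have sp: "real s > 0" using s by simp
    show "(if t = 0 then exp (-l) * poi q s else 0) + l * (cc l t * poi q (s - t) * real (s - t) / real s) = h t"
    proof (cases t)
      case 0 then show ?thesis using sp by (simp add: h_def cc_def poi_def ex ex2)
    next
      case (Suc k) then show ?thesis using sp
        by (simp add: h_def cc_def poi_def ex ex2 field_simps)
    qed
  qed
  also have "\<dots> = (\<Sum>t\<le>r. h t)" by (simp add: h_def s)
  also have "\<dots> = (\<Sum>t\<le>r. q * (exp (-(l+q)) / fact (Suc r)) * (of_nat (r choose t) * l ^ t * q ^ (r - t)))"
  proof (intro sum.cong refl)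
    fix t assume "t \<in> {..r}"
    then have t: "t \<le> r" by simp
    have e1: "Suc r - t = Suc (r - t)" using t by simp
    have ex: "exp (-(l+q)) = exp (-l) * exp (-q)" by (simp add: exp_add[symmetric])
    have C: "real (r choose t) = fact r / (fact t * fact (r - t))" using binomial_fact[OF t, where 'a=real] by simp
    show "h t = q * (exp (-(l+q)) / fact (Suc r)) * (of_nat (r choose t) * l ^ t * q ^ (r - t))"
      unfolding h_def s e1 C ex using t3[of l q t r] by simp
  qed
  also have "\<dots> = q * (exp (-(l+q)) / fact (Suc r)) * (l + q) ^ r"
    by (simp add: binomial_ring sum_distrib_left)
  also have "\<dots> = q * cc (l + q) s" using s by (simp add: cc_def)
  finally show ?thesis .
qed


lemma cvx2:
  assumes conv: "convex_on {0..} \<psi>" and "x \<ge> 0" "y \<ge> 0" "u \<ge> 0" "v \<ge> 0" "u + v = 1"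
  shows "\<psi> (u * x + v * y) \<le> u * \<psi> x + v * \<psi> y"
  using assms unfolding convex_on_def by auto

lemma chord:
  assumes conv: "convex_on {0..} \<psi>" and s: "s \<ge> 0" and a: "a \<ge> 0"
  shows "\<psi> (s + real m * a) \<ge> \<psi> s + real m * (\<psi> (s + a) - \<psi> s)"
proof (cases "m = 0")
  case True then show ?thesis by simp
next
  case False
  then have m: "real m \<ge> 1" by simp
  have "\<psi> ((1 - 1 / real m) * s + (1 / real m) * (s + real m * a)) \<le> (1 - 1 / real m) * \<psi> s + (1 / real m) * \<psi> (s + real m * a)"
    by (rule cvx2[OF conv]) (use s a m in auto)
  moreover have "(1 - 1 / real m) * s + (1 / real m) * (s + real m * a) = s + a"
    using m by (simp add: field_simps)
  ultimately have "\<psi> (s + a) \<le> (1 - 1 / real m) * \<psi> s + (1 / real m) * \<psi> (s + real m * a)" by simp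
  then have "real m * \<psi> (s + a) \<le> real m * ((1 - 1 / real m) * \<psi> s + (1 / real m) * \<psi> (s + real m * a))"
    using m by simp
  also have "\<dots> = (real m - 1) * \<psi> s + \<psi> (s + real m * a)" using m by (simp add: field_simps)
  finally show ?thesis by (simp add: algebra_simps)
qed

lemma jen2:
  assumes conv: "convex_on {0..} \<psi>" and x: "x \<ge> 0" and y: "y \<ge> 0" and tm: "t + m > 0"
  shows "\<psi> (real t * x + real m * y) \<le> real t / real (t + m) * \<psi> (real (t + m) * x) + real m / real (t + m) * \<psi> (real (t + m) * y)"
proof -
  have "\<psi> (real t / real (t + m) * (real (t + m) * x) + real m / real (t + m) * (real (t + m) * y))
     \<le> real t / real (t + m) * \<psi> (real (t + m) * x) + real m / real (t + m) * \<psi> (real (t + m) * y)"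
  proof (rule cvx2[OF conv])
    have tp: "real (t + m) > 0" using tm by (simp only: of_nat_0_less_iff)
    show "real t / real (t + m) + real m / real (t + m) = 1"
      using tp by (simp add: add_divide_distrib[symmetric] del: of_nat_add)
  qed (use x y in auto)
  moreover have "real t / real (t + m) * (real (t + m) * x) + real m / real (t + m) * (real (t + m) * y) = real t * x + real m * y"
  proof -
    have tp: "real (t + m) > 0" using tm by (simp only: of_nat_0_less_iff)
    have h: "\<And>a b x. (b::real) \<noteq> 0 \<Longrightarrow> a / b * (b * x) = a * x" by simp
    show ?thesis using tp by (simp only: h[of "real (t + m)"] less_irrefl)
  qed
  ultimately show ?thesis by simp
qed

lemma poi_nonneg: "q \<ge> 0 \<Longrightarrow> poi q m \<ge> 0"
  by (simp add: poi_def)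

lemma cc_nonneg: "l \<ge> 0 \<Longrightarrow> cc l t \<ge> 0"
  by (simp add: cc_def)

lemma poi_sums: "(\<lambda>m. poi q m) sums 1"
proof -
  have "(\<lambda>m. exp (-q) * (q ^ m /\<^sub>R fact m)) sums (exp (-q) * exp q)"
    by (rule sums_mult[OF exp_converges])
  then show ?thesis by (simp add: poi_def mult_exp_exp field_simps)
qed

lemma poi_m_sums: "(\<lambda>m. poi q m * real m) sums q"
proof -
  have "(\<lambda>m. q * poi q m) sums (q * 1)" by (rule sums_mult[OF poi_sums])
  moreover have "(\<lambda>m. poi q (Suc m) * real (Suc m)) = (\<lambda>m. q * poi q m)"
    by (rule ext) (simp add: poi_def fact_Suc field_simps del: of_nat_Suc)
  ultimately have "(\<lambda>m. poi q (Suc m) * real (Suc m)) sums q" by simp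
  then show ?thesis by (subst (asm) sums_Suc_iff) simp
qed

lemma L1e:
  assumes conv: "convex_on {0..} \<psi>" and nn: "\<And>x. x \<ge> 0 \<Longrightarrow> \<psi> x \<ge> 0"
    and s: "s \<ge> 0" and a: "a \<ge> 0" and q: "0 \<le> q" "q \<le> 1"
  shows "ennreal ((1 - q) * \<psi> s + q * \<psi> (s + a)) \<le> (\<Sum>m. ennreal (poi q m * \<psi> (s + real m * a)))"
proof -
  define d where "d = \<psi> (s + a) - \<psi> s"
  define dp where "dp = max 0 d"
  define dm where "dm = max 0 (- d)"
  have dpm: "dp \<ge> 0" "dm \<ge> 0" "d = dp - dm" by (auto simp: dp_def dm_def)
  have pt: "poi q m * \<psi> s + poi q m * real m * dp \<le> poi q m * \<psi> (s + real m * a) + poi q m * real m * dm" for m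
  proof -
    have "\<psi> s + real m * d \<le> \<psi> (s + real m * a)" using chord[OF conv s a, of m] by (simp add: d_def)
    then have "poi q m * (\<psi> s + real m * d) \<le> poi q m * \<psi> (s + real m * a)"
      by (intro mult_left_mono poi_nonneg q)
    then show ?thesis by (simp add: dpm algebra_simps)
  qed
  have s1: "(\<lambda>m. poi q m * \<psi> s + poi q m * real m * dp) sums (1 * \<psi> s + q * dp)"
    by (intro sums_add sums_mult2 poi_sums) (use poi_m_sums[of q] in \<open>auto dest: sums_mult2[where c=dp]\<close>)
  have s2: "(\<lambda>m. poi q m * real m * dm) sums (q * dm)"
    using sums_mult2[OF poi_m_sums[of q], of dm] by simp
  have ge0: "\<And>m. 0 \<le> poi q m * \<psi> (s + real m * a)" using nn s a q by (simp add: poi_nonneg)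
  have "ennreal (\<psi> s + q * dp) = (\<Sum>m. ennreal (poi q m * \<psi> s + poi q m * real m * dp))"
    using s1 by (intro suminf_ennreal_eq[symmetric]) (use nn s q dpm in \<open>auto simp: poi_nonneg\<close>)
  also have "\<dots> \<le> (\<Sum>m. ennreal (poi q m * \<psi> (s + real m * a)) + ennreal (poi q m * real m * dm))"
    by (intro suminf_le summableI) (use pt dpm q ge0 in \<open>auto simp: poi_nonneg simp flip: ennreal_plus\<close>)
  also have "\<dots> = (\<Sum>m. ennreal (poi q m * \<psi> (s + real m * a))) + (\<Sum>m. ennreal (poi q m * real m * dm))"
    by (rule suminf_add[symmetric]) auto
  also have "(\<Sum>m. ennreal (poi q m * real m * dm)) = ennreal (q * dm)"
    using s2 by (intro suminf_ennreal_eq) (use q dpm in \<open>auto simp: poi_nonneg\<close>)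
  finally have *: "ennreal (\<psi> s + q * dp) \<le> (\<Sum>m. ennreal (poi q m * \<psi> (s + real m * a))) + ennreal (q * dm)" .
  have dd: "dp = \<psi> (s + a) - \<psi> s + dm" using dpm by (simp add: d_def)
  have "\<psi> s + q * dp = ((1 - q) * \<psi> s + q * \<psi> (s + a)) + q * dm"
    unfolding dd by (simp add: algebra_simps)
  moreover have "0 \<le> (1 - q) * \<psi> s + q * \<psi> (s + a)" using nn s a q by simp
  ultimately have "ennreal (\<psi> s + q * dp) = ennreal ((1 - q) * \<psi> s + q * \<psi> (s + a)) + ennreal (q * dm)"
    using q dpm by (subst ennreal_plus[symmetric]) auto
  with * have "ennreal (q * dm) + ennreal ((1 - q) * \<psi> s + q * \<psi> (s + a)) \<le> ennreal (q * dm) + (\<Sum>m. ennreal (poi q m * \<psi> (s + real m * a)))"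
    by (simp add: add.commute)
  then show ?thesis by (simp add: ennreal_add_left_cancel_le)
qed


definition W :: "(real \<Rightarrow> real) \<Rightarrow> real \<Rightarrow> real \<Rightarrow> ennreal" where
  "W \<psi> l x = (\<Sum>t. ennreal (cc l t * \<psi> (real t * x)))"

lemma suminf_diag_reindex:
  fixes F :: "nat \<Rightarrow> nat \<Rightarrow> ennreal"
  shows "(\<Sum>t. \<Sum>m. F t m) = (\<Sum>s. \<Sum>t\<le>s. F t (s - t))"
proof -
  have "(\<Sum>t. \<Sum>m. F t m) = (\<integral>\<^sup>+ t. \<integral>\<^sup>+ m. (\<lambda>(t,m). F t m) (t, m) \<partial>count_space UNIV \<partial>count_space UNIV)"
    by (simp add: nn_integral_count_space_nat)
  also have "\<dots> = (\<integral>\<^sup>+ x. (\<lambda>(t,m). F t m) x \<partial>count_space UNIV)"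
    by (rule nn_integral_fst_count_space)
  also have "\<dots> = (\<integral>\<^sup>+ x. (\<lambda>(s,t). F t (s - t)) ((\<lambda>(t,m). (t+m, t)) x) \<partial>count_space UNIV)"
    by (intro nn_integral_cong) auto
  also have "\<dots> = (\<integral>\<^sup>+ x. (\<lambda>(s,t). F t (s - t)) x \<partial>count_space {(s,t). t \<le> s})"
  proof (rule nn_integral_bij_count_space)
    show "bij_betw (\<lambda>(t::nat, m::nat). (t + m, t)) UNIV {(s, t). t \<le> s}"
      unfolding bij_betw_def inj_on_def
      by (auto simp: image_def le_iff_add)
  qed
  also have "\<dots> = (\<integral>\<^sup>+ x. (\<lambda>(s,t). if t \<le> s then F t (s - t) else 0) x \<partial>count_space UNIV)"
    by (subst nn_integral_count_space_indicator) (auto intro!: nn_integral_cong split: split_indicator)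
  also have "\<dots> = (\<integral>\<^sup>+ s. \<integral>\<^sup>+ t. (\<lambda>(s,t). if t \<le> s then F t (s - t) else 0) (s, t) \<partial>count_space UNIV \<partial>count_space UNIV)"
    by (rule nn_integral_fst_count_space[symmetric])
  also have "\<dots> = (\<Sum>s. \<Sum>t. if t \<le> s then F t (s - t) else 0)"
    by (simp add: nn_integral_count_space_nat)
  also have "\<dots> = (\<Sum>s. \<Sum>t\<le>s. F t (s - t))"
    by (intro suminf_cong) (subst suminf_finite[of "{..s}" for s], auto)
  finally show ?thesis .
qed

lemma en_comb:
  assumes "0 \<le> q" "q \<le> 1" "A \<ge> 0" "B \<ge> 0"
  shows "ennreal (1 - q) * ennreal A + ennreal q * ennreal B = ennreal ((1 - q) * A + q * B)"
  using assms by (simp add: ennreal_mult[symmetric] ennreal_plus[symmetric] del: ennreal_plus)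

lemma S1:
  assumes conv: "convex_on {0..} \<psi>" and nn: "\<And>x. x \<ge> 0 \<Longrightarrow> \<psi> x \<ge> 0"
    and l: "l \<ge> 0" and q: "0 \<le> q" "q \<le> 1" and a: "a \<ge> 0" and x: "x \<ge> 0"
  shows "ennreal (1 - q) * W \<psi> l x + ennreal q * W (\<lambda>y. \<psi> (y + a)) l x
     \<le> (\<Sum>t. \<Sum>m. ennreal (cc l t * poi q m * \<psi> (real t * x + real m * a)))"
proof -
  have "ennreal (1 - q) * W \<psi> l x + ennreal q * W (\<lambda>y. \<psi> (y + a)) l x
      = (\<Sum>t. ennreal (1 - q) * ennreal (cc l t * \<psi> (real t * x)) + ennreal q * ennreal (cc l t * \<psi> (real t * x + a)))"
    unfolding W_def by (subst suminf_add[symmetric]) auto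
  also have "\<dots> \<le> (\<Sum>t. \<Sum>m. ennreal (cc l t * poi q m * \<psi> (real t * x + real m * a)))"
  proof (intro suminf_le summableI)
    fix t
    have tx: "real t * x \<ge> 0" using x by simp
    have "ennreal (1 - q) * ennreal (cc l t * \<psi> (real t * x)) + ennreal q * ennreal (cc l t * \<psi> (real t * x + a))
        = ennreal (cc l t) * ennreal ((1 - q) * \<psi> (real t * x) + q * \<psi> (real t * x + a))"
    proof -
      have c: "cc l t \<ge> 0" by (rule cc_nonneg[OF l])
      have p1: "\<psi> (real t * x) \<ge> 0" by (rule nn[OF tx])
      have p2: "\<psi> (real t * x + a) \<ge> 0" using nn tx a by simp
      have "ennreal (1 - q) * ennreal (cc l t * \<psi> (real t * x)) + ennreal q * ennreal (cc l t * \<psi> (real t * x + a))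
          = ennreal ((1 - q) * (cc l t * \<psi> (real t * x)) + q * (cc l t * \<psi> (real t * x + a)))"
        by (rule en_comb) (use q c p1 p2 in auto)
      also have "(1 - q) * (cc l t * \<psi> (real t * x)) + q * (cc l t * \<psi> (real t * x + a))
          = cc l t * ((1 - q) * \<psi> (real t * x) + q * \<psi> (real t * x + a))" by (simp add: algebra_simps)
      also have "ennreal (cc l t * ((1 - q) * \<psi> (real t * x) + q * \<psi> (real t * x + a)))
          = ennreal (cc l t) * ennreal ((1 - q) * \<psi> (real t * x) + q * \<psi> (real t * x + a))"
        by (rule ennreal_mult'[OF c])
      finally show ?thesis .
    qed
    also have "\<dots> \<le> ennreal (cc l t) * (\<Sum>m. ennreal (poi q m * \<psi> (real t * x + real m * a)))"
      by (intro mult_left_mono L1e[OF conv nn tx a q]) auto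
    also have "\<dots> = (\<Sum>m. ennreal (cc l t * poi q m * \<psi> (real t * x + real m * a)))"
      using cc_nonneg[OF l, of t] by (simp add: ennreal_mult' mult.assoc)
    finally show "ennreal (1 - q) * ennreal (cc l t * \<psi> (real t * x)) + ennreal q * ennreal (cc l t * \<psi> (real t * x + a))
        \<le> (\<Sum>m. ennreal (cc l t * poi q m * \<psi> (real t * x + real m * a)))" .
  qed
  finally show ?thesis .
qed

definition G :: "real \<Rightarrow> real \<Rightarrow> nat \<Rightarrow> real" where
  "G l q s = (\<Sum>t\<le>s. cc l t * poi q (s - t) * real (s - t) / real s)"

lemma G_nonneg: "l \<ge> 0 \<Longrightarrow> q \<ge> 0 \<Longrightarrow> G l q s \<ge> 0"
  unfolding G_def by (intro sum_nonneg) (simp add: cc_nonneg poi_nonneg)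

lemma S2:
  assumes conv: "convex_on {0..} \<psi>" and nn: "\<And>x. x \<ge> 0 \<Longrightarrow> \<psi> x \<ge> 0"
    and l: "l \<ge> 0" and q: "0 \<le> q" and a: "a \<ge> 0" and x: "x \<ge> 0"
  shows "(\<Sum>t. \<Sum>m. ennreal (cc l t * poi q m * \<psi> (real t * x + real m * a)))
     \<le> W \<psi> (l + q) x + (\<Sum>s. ennreal (G l q s * \<psi> (real s * a)))"
proof -
  define F1 where "F1 t m = ennreal (cc l t * poi q m * (real t / real (t + m)) * \<psi> (real (t + m) * x))" for t m
  define F2 where "F2 t m = ennreal (cc l t * poi q m * (real m / real (t + m)) * \<psi> (real (t + m) * a))" for t m
  have "(\<Sum>t. \<Sum>m. ennreal (cc l t * poi q m * \<psi> (real t * x + real m * a))) \<le> (\<Sum>t. \<Sum>m. F1 t m + F2 t m)"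
  proof (intro suminf_le summableI)
    fix t m
    show "ennreal (cc l t * poi q m * \<psi> (real t * x + real m * a)) \<le> F1 t m + F2 t m"
    proof (cases "t = 0")
      case True then show ?thesis by (simp add: cc_def)
    next
      case False
      have c: "cc l t * poi q m \<ge> 0" using l q by (simp add: cc_nonneg poi_nonneg)
      have j: "\<psi> (real t * x + real m * a) \<le> real t / real (t + m) * \<psi> (real (t + m) * x) + real m / real (t + m) * \<psi> (real (t + m) * a)"
        by (rule jen2[OF conv x a]) (use False in simp)
      have "cc l t * poi q m * \<psi> (real t * x + real m * a)
          \<le> cc l t * poi q m * (real t / real (t + m) * \<psi> (real (t + m) * x) + real m / real (t + m) * \<psi> (real (t + m) * a))"
        by (rule mult_left_mono[OF j c])
      then have "ennreal (cc l t * poi q m * \<psi> (real t * x + real m * a)) \<le>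
          ennreal (cc l t * poi q m * (real t / real (t + m)) * \<psi> (real (t + m) * x) + cc l t * poi q m * (real m / real (t + m)) * \<psi> (real (t + m) * a))"
        by (intro ennreal_leI) (simp add: algebra_simps)
      also have "\<dots> = F1 t m + F2 t m"
        unfolding F1_def F2_def using c nn x a
        by (subst ennreal_plus[symmetric]) (auto intro!: mult_nonneg_nonneg divide_nonneg_nonneg)
      finally show ?thesis .
    qed
  qed
  also have "\<dots> = (\<Sum>t. \<Sum>m. F1 t m) + (\<Sum>t. \<Sum>m. F2 t m)"
    by (simp add: suminf_add)
  also have "(\<Sum>t. \<Sum>m. F1 t m) = W \<psi> (l + q) x"
  proof -
    have "(\<Sum>t. \<Sum>m. F1 t m) = (\<Sum>s. \<Sum>t\<le>s. F1 t (s - t))" by (rule suminf_diag_reindex)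
    also have "\<dots> = (\<Sum>s. ennreal (cc (l + q) s * \<psi> (real s * x)))"
    proof (intro suminf_cong)
      fix s
      have "(\<Sum>t\<le>s. F1 t (s - t)) = (\<Sum>t\<le>s. ennreal (cc l t * poi q (s - t) * real t / real s * \<psi> (real s * x)))"
        unfolding F1_def by (intro sum.cong refl) (simp add: )
      also have "\<dots> = ennreal (\<Sum>t\<le>s. cc l t * poi q (s - t) * real t / real s * \<psi> (real s * x))"
        using l q nn x by (intro sum_ennreal) (auto simp: cc_nonneg poi_nonneg)
      also have "(\<Sum>t\<le>s. cc l t * poi q (s - t) * real t / real s * \<psi> (real s * x)) = cc (l + q) s * \<psi> (real s * x)"
        by (subst coefA[symmetric]) (simp add: sum_distrib_right)
      finally show "(\<Sum>t\<le>s. F1 t (s - t)) = ennreal (cc (l + q) s * \<psi> (real s * x))" .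
    qed
    finally show ?thesis unfolding W_def .
  qed
  also have "(\<Sum>t. \<Sum>m. F2 t m) = (\<Sum>s. ennreal (G l q s * \<psi> (real s * a)))"
  proof -
    have "(\<Sum>t. \<Sum>m. F2 t m) = (\<Sum>s. \<Sum>t\<le>s. F2 t (s - t))" by (rule suminf_diag_reindex)
    also have "\<dots> = (\<Sum>s. ennreal (G l q s * \<psi> (real s * a)))"
    proof (intro suminf_cong)
      fix s
      have "(\<Sum>t\<le>s. F2 t (s - t)) = (\<Sum>t\<le>s. ennreal (cc l t * poi q (s - t) * real (s - t) / real s * \<psi> (real s * a)))"
        unfolding F2_def by (intro sum.cong refl) (simp add: )
      also have "\<dots> = ennreal (\<Sum>t\<le>s. cc l t * poi q (s - t) * real (s - t) / real s * \<psi> (real s * a))"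
        using l q nn a by (intro sum_ennreal) (auto simp: cc_nonneg poi_nonneg)
      also have "(\<Sum>t\<le>s. cc l t * poi q (s - t) * real (s - t) / real s * \<psi> (real s * a)) = G l q s * \<psi> (real s * a)"
        by (simp add: G_def sum_distrib_right)
      finally show "(\<Sum>t\<le>s. F2 t (s - t)) = ennreal (G l q s * \<psi> (real s * a))" .
    qed
    finally show ?thesis .
  qed
  finally show ?thesis .
qed


lemma S3:
  assumes nn: "\<And>x. x \<ge> 0 \<Longrightarrow> \<psi> x \<ge> 0" and l: "l \<ge> 0" and q: "q \<ge> 0" and a: "a \<ge> 0"
  shows "ennreal (exp (-l)) * (\<Sum>m. ennreal (poi q m * \<psi> (real m * a))) + ennreal l * (\<Sum>s. ennreal (G l q s * \<psi> (real s * a)))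
     = ennreal (exp (-(l+q)) * \<psi> 0) + ennreal q * W \<psi> (l + q) a"
proof -
  have ps: "\<And>s. \<psi> (real s * a) \<ge> 0" using nn a by simp
  have "ennreal (exp (-l)) * (\<Sum>m. ennreal (poi q m * \<psi> (real m * a))) + ennreal l * (\<Sum>s. ennreal (G l q s * \<psi> (real s * a)))
      = (\<Sum>s. ennreal (exp (-l)) * ennreal (poi q s * \<psi> (real s * a)) + ennreal l * ennreal (G l q s * \<psi> (real s * a)))"
    by (subst suminf_add[symmetric]) auto
  also have "\<dots> = (\<Sum>s. ennreal ((if s = 0 then exp (-(l+q)) * \<psi> 0 else 0)) + ennreal q * ennreal (cc (l + q) s * \<psi> (real s * a)))"
  proof (intro suminf_cong)
    fix s
    have e: "exp (-l) * poi q s + l * G l q s = (if s = 0 then exp (-(l+q)) else 0) + q * cc (l + q) s"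
    proof (cases "s = 0")
      case True then show ?thesis by (simp add: G_def cc_def poi_def exp_add[symmetric])
    next
      case False then show ?thesis using coefB[of s l q] by (simp add: G_def)
    qed
    have g: "G l q s \<ge> 0" using l q by (rule G_nonneg)
    have "ennreal (exp (-l)) * ennreal (poi q s * \<psi> (real s * a)) + ennreal l * ennreal (G l q s * \<psi> (real s * a))
        = ennreal ((exp (-l) * poi q s + l * G l q s) * \<psi> (real s * a))"
      using ps[of s] g l q poi_nonneg[OF q, of s]
      by (simp add: ennreal_mult[symmetric] ennreal_plus[symmetric] algebra_simps del: ennreal_plus)
    also have "\<dots> = ennreal ((if s = 0 then exp (-(l+q)) * \<psi> 0 else 0)) + ennreal q * ennreal (cc (l + q) s * \<psi> (real s * a))"
      unfolding e using ps[of s] q cc_nonneg[of "l+q" s] l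
      by (cases "s = 0") (simp_all add: ennreal_mult[symmetric] algebra_simps)
    finally show "ennreal (exp (-l)) * ennreal (poi q s * \<psi> (real s * a)) + ennreal l * ennreal (G l q s * \<psi> (real s * a))
        = ennreal ((if s = 0 then exp (-(l+q)) * \<psi> 0 else 0)) + ennreal q * ennreal (cc (l + q) s * \<psi> (real s * a))" .
  qed
  also have "\<dots> = (\<Sum>s. ennreal ((if s = 0 then exp (-(l+q)) * \<psi> 0 else 0))) + ennreal q * W \<psi> (l + q) a"
    unfolding W_def by (subst suminf_add[symmetric]) auto
  also have "(\<Sum>s. ennreal ((if s = 0 then exp (-(l+q)) * \<psi> 0 else 0))) = ennreal (exp (-(l+q)) * \<psi> 0)"
    by (subst suminf_finite[of "{0}"]) auto
  finally show ?thesis .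
qed

lemma pure_step:
  fixes \<psi> :: "real \<Rightarrow> real" and p al :: "nat \<Rightarrow> real" and J :: "nat set"
  assumes conv: "convex_on {0..} \<psi>" and nn: "\<And>x. x \<ge> 0 \<Longrightarrow> \<psi> x \<ge> 0"
    and l: "l \<ge> 0" and q: "0 \<le> q" "q \<le> 1" and a: "a \<ge> 0" and J: "finite J"
    and p: "\<And>j. j \<in> J \<Longrightarrow> p j \<ge> 0" and al: "\<And>j. j \<in> J \<Longrightarrow> al j \<ge> 0"
    and lsum: "(\<Sum>j\<in>J. p j) = l"
  shows "ennreal (1 - q) * (ennreal (exp (-l) * \<psi> 0) + (\<Sum>j\<in>J. ennreal (p j) * W \<psi> l (al j)))
       + ennreal q * (ennreal (exp (-l) * \<psi> a) + (\<Sum>j\<in>J. ennreal (p j) * W (\<lambda>y. \<psi> (y + a)) l (al j)))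
     \<le> ennreal (exp (-(l+q)) * \<psi> 0) + (\<Sum>j\<in>J. ennreal (p j) * W \<psi> (l + q) (al j)) + ennreal q * W \<psi> (l + q) a"
proof -
  define B where "B = (\<Sum>s. ennreal (G l q s * \<psi> (real s * a)))"
  have "ennreal (1 - q) * (ennreal (exp (-l) * \<psi> 0) + (\<Sum>j\<in>J. ennreal (p j) * W \<psi> l (al j)))
       + ennreal q * (ennreal (exp (-l) * \<psi> a) + (\<Sum>j\<in>J. ennreal (p j) * W (\<lambda>y. \<psi> (y + a)) l (al j)))
     = (ennreal (1 - q) * ennreal (exp (-l) * \<psi> 0) + ennreal q * ennreal (exp (-l) * \<psi> a))
       + (\<Sum>j\<in>J. ennreal (p j) * (ennreal (1 - q) * W \<psi> l (al j) + ennreal q * W (\<lambda>y. \<psi> (y + a)) l (al j)))"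
    by (simp add: distrib_left sum_distrib_left sum.distrib mult_ac add_ac)
  also have "\<dots> \<le> ennreal (exp (-l)) * (\<Sum>m. ennreal (poi q m * \<psi> (real m * a)))
       + (\<Sum>j\<in>J. ennreal (p j) * (W \<psi> (l + q) (al j) + B))"
  proof (rule add_mono)
    have p0: "\<psi> 0 \<ge> 0" "\<psi> a \<ge> 0" using nn a by auto
    have "ennreal (1 - q) * ennreal (exp (-l) * \<psi> 0) + ennreal q * ennreal (exp (-l) * \<psi> a)
        = ennreal ((1 - q) * (exp (-l) * \<psi> 0) + q * (exp (-l) * \<psi> a))"
      by (rule en_comb) (use q p0 in auto)
    also have "\<dots> = ennreal (exp (-l) * ((1 - q) * \<psi> 0 + q * \<psi> (0 + a)))"
      by (simp add: algebra_simps)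
    also have "\<dots> = ennreal (exp (-l)) * ennreal ((1 - q) * \<psi> 0 + q * \<psi> (0 + a))"
      by (rule ennreal_mult') simp
    also have "\<dots> \<le> ennreal (exp (-l)) * (\<Sum>m. ennreal (poi q m * \<psi> (0 + real m * a)))"
      by (intro mult_left_mono L1e[OF conv nn _ a q]) auto
    finally show "ennreal (1 - q) * ennreal (exp (-l) * \<psi> 0) + ennreal q * ennreal (exp (-l) * \<psi> a)
        \<le> ennreal (exp (-l)) * (\<Sum>m. ennreal (poi q m * \<psi> (real m * a)))" by simp
  next
    show "(\<Sum>j\<in>J. ennreal (p j) * (ennreal (1 - q) * W \<psi> l (al j) + ennreal q * W (\<lambda>y. \<psi> (y + a)) l (al j)))
      \<le> (\<Sum>j\<in>J. ennreal (p j) * (W \<psi> (l + q) (al j) + B))"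
    proof (rule sum_mono, rule mult_left_mono)
      fix j assume j: "j \<in> J"
      show "ennreal (1 - q) * W \<psi> l (al j) + ennreal q * W (\<lambda>y. \<psi> (y + a)) l (al j) \<le> W \<psi> (l + q) (al j) + B"
        unfolding B_def using S1[OF conv nn l q a al[OF j]] S2[OF conv nn l q(1) a al[OF j]] by (rule order.trans)
    qed auto
  qed
  also have "(\<Sum>j\<in>J. ennreal (p j) * (W \<psi> (l + q) (al j) + B)) = (\<Sum>j\<in>J. ennreal (p j) * W \<psi> (l + q) (al j)) + ennreal l * B"
  proof -
    have "(\<Sum>j\<in>J. ennreal (p j)) = ennreal l" using p lsum by (subst sum_ennreal) auto
    then show ?thesis by (simp add: distrib_left sum.distrib sum_distrib_right[symmetric])
  qed
  also have "ennreal (exp (-l)) * (\<Sum>m. ennreal (poi q m * \<psi> (real m * a))) + ((\<Sum>j\<in>J. ennreal (p j) * W \<psi> (l + q) (al j)) + ennreal l * B)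
      = (ennreal (exp (-l)) * (\<Sum>m. ennreal (poi q m * \<psi> (real m * a))) + ennreal l * B) + (\<Sum>j\<in>J. ennreal (p j) * W \<psi> (l + q) (al j))"
    by (simp add: add_ac)
  also have "ennreal (exp (-l)) * (\<Sum>m. ennreal (poi q m * \<psi> (real m * a))) + ennreal l * B = ennreal (exp (-(l+q)) * \<psi> 0) + ennreal q * W \<psi> (l + q) a"
    unfolding B_def by (rule S3[OF nn l q(1) a])
  finally show ?thesis by (simp add: add_ac)
qed


lemma (in prob_space) indep_var_nn_mult:
  assumes ind: "indep_var S X T Y" and f: "f \<in> borel_measurable S" and g: "g \<in> borel_measurable T"
    and f0: "\<And>\<omega>. \<omega> \<in> space M \<Longrightarrow> 0 \<le> f (X \<omega>)" and g0: "\<And>\<omega>. \<omega> \<in> space M \<Longrightarrow> 0 \<le> g (Y \<omega>)"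
  shows "(\<integral>\<^sup>+\<omega>. ennreal (f (X \<omega>) * g (Y \<omega>)) \<partial>M) = (\<integral>\<^sup>+\<omega>. ennreal (f (X \<omega>)) \<partial>M) * (\<integral>\<^sup>+\<omega>. ennreal (g (Y \<omega>)) \<partial>M)"
proof -
  define f' where "f' x = ennreal (f x)" for x
  define g' where "g' x = ennreal (g x)" for x
  have mf: "f' \<in> borel_measurable S" unfolding f'_def using f by measurable
  have mg: "g' \<in> borel_measurable T" unfolding g'_def using g by measurable
  have "indep_var borel (f' \<circ> X) borel (g' \<circ> Y)"
    by (rule indep_var_compose[OF ind mf mg])
  then have iv: "indep_vars (\<lambda>_. borel) (case_bool (f' \<circ> X) (g' \<circ> Y)) UNIV"
  proof -
    have "(\<lambda>_. borel) = case_bool borel (borel :: ennreal measure)"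
      by (rule ext) (simp split: bool.split)
    with \<open>indep_var borel (f' \<circ> X) borel (g' \<circ> Y)\<close> show ?thesis
      unfolding indep_var_def by simp
  qed
  have "(\<integral>\<^sup>+\<omega>. (\<Prod>i\<in>UNIV. case_bool (f' \<circ> X) (g' \<circ> Y) i \<omega>) \<partial>M)
      = (\<Prod>i\<in>UNIV. \<integral>\<^sup>+\<omega>. case_bool (f' \<circ> X) (g' \<circ> Y) i \<omega> \<partial>M)"
    by (rule indep_vars_nn_integral[OF _ iv]) auto
  then have "(\<integral>\<^sup>+\<omega>. f' (X \<omega>) * g' (Y \<omega>) \<partial>M) = (\<integral>\<^sup>+\<omega>. f' (X \<omega>) \<partial>M) * (\<integral>\<^sup>+\<omega>. g' (Y \<omega>) \<partial>M)"
    by (simp add: UNIV_bool mult.commute comp_def)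
  moreover have "(\<integral>\<^sup>+\<omega>. f' (X \<omega>) * g' (Y \<omega>) \<partial>M) = (\<integral>\<^sup>+\<omega>. ennreal (f (X \<omega>) * g (Y \<omega>)) \<partial>M)"
    by (intro nn_integral_cong) (simp add: f'_def g'_def f0 ennreal_mult')
  ultimately show ?thesis by (simp add: f'_def g'_def)
qed

lemma poisson_nn:
  assumes P_rv: "P \<in> measurable M (count_space UNIV)"
    and P_poisson: "distr M (count_space UNIV) P = measure_pmf (poisson_pmf 1)"
    and h: "\<And>m. h m \<ge> 0"
  shows "(\<integral>\<^sup>+x. ennreal (h (P x)) \<partial>M) = (\<Sum>m. ennreal (poi 1 m * h m))"
proof -
  have "(\<integral>\<^sup>+x. ennreal (h (P x)) \<partial>M) = (\<integral>\<^sup>+m. ennreal (h m) \<partial>distr M (count_space UNIV) P)"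
    by (rule nn_integral_distr[symmetric]) (use P_rv in auto)
  also have "\<dots> = (\<integral>\<^sup>+m. ennreal (pmf (poisson_pmf 1) m) * ennreal (h m) \<partial>count_space UNIV)"
    unfolding P_poisson nn_integral_measure_pmf ..
  also have "\<dots> = (\<Sum>m. ennreal (poi 1 m * h m))"
    by (simp add: nn_integral_count_space_nat poi_def mult.commute, intro suminf_cong)
       (simp add: ennreal_mult''[symmetric] h)
  finally show ?thesis .
qed

lemma (in prob_space) nn_01:
  assumes Z: "Z \<in> borel_measurable M" and Z01: "\<And>x. x \<in> space M \<Longrightarrow> Z x \<in> {0, 1}"
  shows "(\<integral>\<^sup>+x. ennreal (Z x) \<partial>M) = ennreal (prob {x \<in> space M. Z x = 1})"
    and "(\<integral>\<^sup>+x. ennreal (1 - Z x) \<partial>M) = ennreal (1 - prob {x \<in> space M. Z x = 1})"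
proof -
  have ev: "{x \<in> space M. Z x = 1} \<in> events" using Z by measurable
  have "(\<integral>\<^sup>+x. ennreal (Z x) \<partial>M) = (\<integral>\<^sup>+x. indicator {x \<in> space M. Z x = 1} x \<partial>M)"
    by (intro nn_integral_cong) (auto simp: indicator_def dest!: Z01)
  also have "\<dots> = ennreal (prob {x \<in> space M. Z x = 1})"
    using ev by (simp add: emeasure_eq_measure)
  finally show "(\<integral>\<^sup>+x. ennreal (Z x) \<partial>M) = ennreal (prob {x \<in> space M. Z x = 1})" .
  have "(\<integral>\<^sup>+x. ennreal (1 - Z x) \<partial>M) = (\<integral>\<^sup>+x. indicator (space M - {x \<in> space M. Z x = 1}) x \<partial>M)"
    by (intro nn_integral_cong) (auto simp: indicator_def dest!: Z01)
  also have "\<dots> = ennreal (1 - prob {x \<in> space M. Z x = 1})"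
    using ev by (simp add: emeasure_eq_measure prob_compl)
  finally show "(\<integral>\<^sup>+x. ennreal (1 - Z x) \<partial>M) = ennreal (1 - prob {x \<in> space M. Z x = 1})" .
qed

lemma convex_shift:
  fixes \<psi> :: "real \<Rightarrow> real" and a :: real
  assumes cv: "convex_on UNIV \<psi>"
  shows "convex_on UNIV (\<lambda>x. \<psi> (x + a))"
proof -
  have c: "\<psi> (u * x + v * y) \<le> u * \<psi> x + v * \<psi> y" if "u \<ge> 0" "v \<ge> 0" "u + v = 1" for x y u v :: real
    using cv that unfolding convex_on_def by auto
  show ?thesis unfolding convex_on_def
  proof (intro conjI ballI allI impI)
    fix x y u v :: real assume uv: "0 \<le> u" "0 \<le> v" "u + v = 1"
    have v: "v = 1 - u" using uv by simp
    have "u *\<^sub>R x + v *\<^sub>R y + a = u * (x + a) + v * (y + a)"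
      unfolding v by (simp add: algebra_simps)
    then show "\<psi> (u *\<^sub>R x + v *\<^sub>R y + a) \<le> u * \<psi> (x + a) + v * \<psi> (y + a)"
      using c[OF uv] by simp
  qed auto
qed

lemma convex_meas:
  fixes \<psi> :: "real \<Rightarrow> real"
  assumes "convex_on UNIV \<psi>"
  shows "\<psi> \<in> borel_measurable borel"
  by (rule borel_measurable_continuous_onI, rule convex_on_continuous) (use assms in auto)


lemma core_lhs:
  fixes N :: "'b measure" and B :: "nat \<Rightarrow> 'b \<Rightarrow> real" and \<alpha> q :: "nat \<Rightarrow> real"
  assumes pN: "prob_space N"
    and B_rv: "\<And>i. i \<in> {1..n} \<Longrightarrow> B i \<in> borel_measurable N"
    and B_bern: "\<And>i y. i \<in> {1..n} \<Longrightarrow> y \<in> space N \<Longrightarrow> B i y \<in> {0, 1}"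
    and B_indep: "prob_space.indep_vars N (\<lambda>_. borel) B {1..n}"
    and \<alpha>_nonneg: "\<And>i. i \<in> {1..n} \<Longrightarrow> \<alpha> i \<ge> 0"
    and q_def: "\<And>j. j \<in> {1..n} \<Longrightarrow> q j = measure N {y \<in> space N. B j y = 1}"
  shows "k \<le> n \<Longrightarrow> \<forall>\<psi>. convex_on UNIV \<psi> \<longrightarrow> (\<forall>x\<ge>0. 0 \<le> \<psi> x) \<longrightarrow>
     (\<integral>\<^sup>+y. ennreal (\<psi> (\<Sum>i=1..k. \<alpha> i * B i y)) \<partial>N)
       \<le> ennreal (exp (- (\<Sum>j=1..k. q j)) * \<psi> 0) + (\<Sum>j=1..k. ennreal (q j) * W \<psi> (\<Sum>j=1..k. q j) (\<alpha> j))"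
proof (induction k)
  case 0
  interpret N: prob_space N by (rule pN)
  show ?case by (simp add: N.emeasure_space_1)
next
  case (Suc k)
  interpret N: prob_space N by (rule pN)
  define K where "K = Suc k"
  have kn: "k \<le> n" "K \<in> {1..n}" using Suc.prems by (auto simp: K_def)
  have sub: "\<And>i. i \<in> {1..k} \<Longrightarrow> i \<in> {1..n}" using kn by auto
  define l where "l = (\<Sum>j=1..k. q j)"
  define a where "a = \<alpha> K"
  define qq where "qq = q K"
  have a0: "a \<ge> 0" using \<alpha>_nonneg kn by (simp add: a_def)
  have qq01: "0 \<le> qq" "qq \<le> 1" using q_def[OF kn(2)] by (auto simp: qq_def)
  have qnn: "\<And>j. j \<in> {1..k} \<Longrightarrow> q j \<ge> 0" using q_def sub by simp
  have l0: "l \<ge> 0" unfolding l_def by (intro sum_nonneg qnn) auto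
  define S where "S y = (\<Sum>i=1..k. \<alpha> i * B i y)" for y
  have S_meas: "S \<in> borel_measurable N" unfolding S_def
    by (intro borel_measurable_sum borel_measurable_times borel_measurable_const B_rv sub) auto
  have S0: "\<And>y. y \<in> space N \<Longrightarrow> S y \<ge> 0"
  proof -
    fix y assume y: "y \<in> space N"
    have "\<And>i. i \<in> {1..k} \<Longrightarrow> 0 \<le> \<alpha> i * B i y"
    proof -
      fix i assume i: "i \<in> {1..k}"
      have "B i y \<in> {0, 1}" using B_bern[OF sub[OF i] y] .
      then have "B i y \<ge> 0" by auto
      then show "0 \<le> \<alpha> i * B i y" using \<alpha>_nonneg[OF sub[OF i]] by simp
    qed
    then show "S y \<ge> 0" unfolding S_def by (rule sum_nonneg)
  qed
  have BK: "B K \<in> borel_measurable N" by (rule B_rv[OF kn(2)])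
  have BK01: "\<And>y. y \<in> space N \<Longrightarrow> B K y \<in> {0, 1}" by (rule B_bern[OF kn(2)])
  have ind: "N.indep_var borel (B K) borel S"
  proof -
    define Y where "Y i = (if i = K then (\<lambda>x::real. x) else (\<lambda>x. \<alpha> i * x))" for i
    have "N.indep_vars (\<lambda>_. borel) (\<lambda>i y. Y i (B i y)) {1..n}"
      by (rule N.indep_vars_compose2[OF B_indep]) (auto simp: Y_def)
    then have "N.indep_vars (\<lambda>_. borel) (\<lambda>i y. Y i (B i y)) (insert K {1..k})"
      by (rule N.indep_vars_subset) (use kn in \<open>auto simp: K_def\<close>)
    then have "N.indep_var borel ((\<lambda>i y. Y i (B i y)) K) borel (\<lambda>\<omega>. \<Sum>i\<in>{1..k}. (\<lambda>i y. Y i (B i y)) i \<omega>)"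
      by (intro N.indep_vars_sum) (auto simp: K_def)
    moreover have "(\<lambda>i y. Y i (B i y)) K = B K" by (simp add: Y_def)
    moreover have "(\<lambda>\<omega>. \<Sum>i\<in>{1..k}. (\<lambda>i y. Y i (B i y)) i \<omega>) = S"
      by (auto simp: Y_def S_def K_def intro!: sum.cong)
    ultimately show ?thesis by simp
  qed
  show ?case
  proof (intro allI impI)
    fix \<psi> :: "real \<Rightarrow> real"
    assume conv: "convex_on UNIV \<psi>" and nn: "\<forall>x\<ge>0. 0 \<le> \<psi> x"
    have nn': "\<And>x. x \<ge> 0 \<Longrightarrow> \<psi> x \<ge> 0" using nn by auto
    have convs: "convex_on UNIV (\<lambda>x. \<psi> (x + a))" by (rule convex_shift[OF conv])
    have nns: "\<forall>x\<ge>0. 0 \<le> \<psi> (x + a)" using nn a0 by auto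
    have psim: "\<psi> \<in> borel_measurable borel" by (rule convex_meas[OF conv])
    have psims: "(\<lambda>x. \<psi> (x + a)) \<in> borel_measurable borel" by (rule convex_meas[OF convs])
    have conv0: "convex_on {0..} \<psi>" by (rule convex_on_subset[OF conv]) auto
    have sumK: "\<And>y. (\<Sum>i=1..Suc k. \<alpha> i * B i y) = S y + a * B K y"
      by (simp add: S_def a_def K_def)
    have "(\<integral>\<^sup>+y. ennreal (\<psi> (\<Sum>i=1..Suc k. \<alpha> i * B i y)) \<partial>N)
        = (\<integral>\<^sup>+y. ennreal ((1 - B K y) * \<psi> (S y)) + ennreal (B K y * \<psi> (S y + a)) \<partial>N)"
    proof (intro nn_integral_cong)
      fix y assume y: "y \<in> space N"
      show "ennreal (\<psi> (\<Sum>i=1..Suc k. \<alpha> i * B i y)) = ennreal ((1 - B K y) * \<psi> (S y)) + ennreal (B K y * \<psi> (S y + a))"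
        using BK01[OF y] unfolding sumK by (auto simp: add.commute)
    qed
    also have "\<dots> = (\<integral>\<^sup>+y. ennreal ((1 - B K y) * \<psi> (S y)) \<partial>N) + (\<integral>\<^sup>+y. ennreal (B K y * \<psi> (S y + a)) \<partial>N)"
      by (rule nn_integral_add) (use BK S_meas psim psims in \<open>auto\<close>)
    also have "(\<integral>\<^sup>+y. ennreal ((1 - B K y) * \<psi> (S y)) \<partial>N) = (\<integral>\<^sup>+y. ennreal (1 - B K y) \<partial>N) * (\<integral>\<^sup>+y. ennreal (\<psi> (S y)) \<partial>N)"
      by (rule N.indep_var_nn_mult[OF ind, where f="\<lambda>b. 1 - b" and g=\<psi>])
         (use S0 nn' psim in \<open>auto dest!: BK01\<close>)
    also have "(\<integral>\<^sup>+y. ennreal (B K y * \<psi> (S y + a)) \<partial>N) = (\<integral>\<^sup>+y. ennreal (B K y) \<partial>N) * (\<integral>\<^sup>+y. ennreal (\<psi> (S y + a)) \<partial>N)"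
      by (rule N.indep_var_nn_mult[OF ind, where f="\<lambda>b. b" and g="\<lambda>s. \<psi> (s + a)"])
         (use S0 nn' a0 psims in \<open>auto dest!: BK01\<close>)
    also have "(\<integral>\<^sup>+y. ennreal (1 - B K y) \<partial>N) = ennreal (1 - qq)"
      using N.nn_01(2)[OF BK BK01] q_def[OF kn(2)] by (simp add: qq_def)
    also have "(\<integral>\<^sup>+y. ennreal (B K y) \<partial>N) = ennreal qq"
      using N.nn_01(1)[OF BK BK01] q_def[OF kn(2)] by (simp add: qq_def)
    also have "ennreal (1 - qq) * (\<integral>\<^sup>+y. ennreal (\<psi> (S y)) \<partial>N) + ennreal qq * (\<integral>\<^sup>+y. ennreal (\<psi> (S y + a)) \<partial>N)
      \<le> ennreal (1 - qq) * (ennreal (exp (- l) * \<psi> 0) + (\<Sum>j=1..k. ennreal (q j) * W \<psi> l (\<alpha> j)))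
       + ennreal qq * (ennreal (exp (- l) * \<psi> a) + (\<Sum>j=1..k. ennreal (q j) * W (\<lambda>y. \<psi> (y + a)) l (\<alpha> j)))"
    proof (intro add_mono mult_left_mono)
      show "(\<integral>\<^sup>+y. ennreal (\<psi> (S y)) \<partial>N) \<le> ennreal (exp (- l) * \<psi> 0) + (\<Sum>j=1..k. ennreal (q j) * W \<psi> l (\<alpha> j))"
        using Suc.IH[OF kn(1)] conv nn unfolding S_def l_def by blast
      have "(\<integral>\<^sup>+y. ennreal ((\<lambda>x. \<psi> (x + a)) (\<Sum>i=1..k. \<alpha> i * B i y)) \<partial>N) \<le> ennreal (exp (- l) * (\<lambda>x. \<psi> (x + a)) 0) + (\<Sum>j=1..k. ennreal (q j) * W (\<lambda>x. \<psi> (x + a)) l (\<alpha> j))"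
        using Suc.IH[OF kn(1)] convs nns unfolding l_def by blast
      then show "(\<integral>\<^sup>+y. ennreal (\<psi> (S y + a)) \<partial>N) \<le> ennreal (exp (- l) * \<psi> a) + (\<Sum>j=1..k. ennreal (q j) * W (\<lambda>y. \<psi> (y + a)) l (\<alpha> j))"
        unfolding S_def by simp
    qed auto
    also have "\<dots> \<le> ennreal (exp (-(l+qq)) * \<psi> 0) + (\<Sum>j=1..k. ennreal (q j) * W \<psi> (l + qq) (\<alpha> j)) + ennreal qq * W \<psi> (l + qq) a"
      by (rule pure_step[OF conv0 nn' l0 qq01 a0]) (use qnn \<alpha>_nonneg sub in \<open>auto simp: l_def\<close>)
    also have "\<dots> = ennreal (exp (- (\<Sum>j=1..Suc k. q j)) * \<psi> 0) + (\<Sum>j=1..Suc k. ennreal (q j) * W \<psi> (\<Sum>j=1..Suc k. q j) (\<alpha> j))"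
      by (simp add: l_def qq_def a_def K_def add.assoc)
    finally show "(\<integral>\<^sup>+y. ennreal (\<psi> (\<Sum>i=1..Suc k. \<alpha> i * B i y)) \<partial>N)
       \<le> ennreal (exp (- (\<Sum>j=1..Suc k. q j)) * \<psi> 0) + (\<Sum>j=1..Suc k. ennreal (q j) * W \<psi> (\<Sum>j=1..Suc k. q j) (\<alpha> j))" .
  qed
qed


lemma superadd:
  fixes \<phi> :: "real \<Rightarrow> real"
  assumes conv: "convex_on {0..} \<phi>" and u: "u \<ge> 0" and v: "v \<ge> 0"
  shows "\<phi> u + \<phi> v \<le> \<phi> 0 + \<phi> (u + v)"
proof (cases "u + v = 0")
  case True then have "u = 0" "v = 0" using u v by auto
  then show ?thesis by simp
next
  case False
  then have s: "u + v > 0" using u v by simp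
  have e1: "v / (u + v) * 0 + u / (u + v) * (u + v) = u" using s by simp
  have e2: "u / (u + v) * 0 + v / (u + v) * (u + v) = v" using s by simp
  have c: "v / (u + v) + u / (u + v) = 1" using s by (simp add: add_divide_distrib[symmetric] add.commute)
  have "\<phi> (v / (u + v) * 0 + u / (u + v) * (u + v)) \<le> v / (u + v) * \<phi> 0 + u / (u + v) * \<phi> (u + v)"
    by (rule cvx2[OF conv]) (use u v s c in auto)
  then have 1: "\<phi> u \<le> v / (u + v) * \<phi> 0 + u / (u + v) * \<phi> (u + v)" using e1 by simp
  have "\<phi> (u / (u + v) * 0 + v / (u + v) * (u + v)) \<le> u / (u + v) * \<phi> 0 + v / (u + v) * \<phi> (u + v)"
    by (rule cvx2[OF conv]) (use u v s c in \<open>auto simp: add.commute\<close>)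
  then have 2: "\<phi> v \<le> u / (u + v) * \<phi> 0 + v / (u + v) * \<phi> (u + v)" using e2 by simp
  have "v / (u + v) * \<phi> 0 + u / (u + v) * \<phi> (u + v) + (u / (u + v) * \<phi> 0 + v / (u + v) * \<phi> (u + v))
      = (v / (u + v) + u / (u + v)) * \<phi> 0 + (v / (u + v) + u / (u + v)) * \<phi> (u + v)"
    by (simp add: algebra_simps)
  also have "\<dots> = \<phi> 0 + \<phi> (u + v)" using c by simp
  finally show ?thesis using 1 2 by linarith
qed

lemma superadd_sum:
  fixes \<phi> :: "real \<Rightarrow> real" and b \<alpha> :: "nat \<Rightarrow> real"
  assumes conv: "convex_on {0..} \<phi>" and fin: "finite I"
    and b: "\<And>i. i \<in> I \<Longrightarrow> b i \<in> {0, 1}" and a: "\<And>i. i \<in> I \<Longrightarrow> \<alpha> i \<ge> 0"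
  shows "(\<Sum>i\<in>I. b i * \<phi> (\<alpha> i)) + (1 - (\<Sum>i\<in>I. b i)) * \<phi> 0 \<le> \<phi> (\<Sum>i\<in>I. \<alpha> i * b i)"
  using fin b a
proof (induction I rule: finite_induct)
  case empty then show ?case by simp
next
  case (insert k F)
  have IH: "(\<Sum>i\<in>F. b i * \<phi> (\<alpha> i)) + (1 - (\<Sum>i\<in>F. b i)) * \<phi> 0 \<le> \<phi> (\<Sum>i\<in>F. \<alpha> i * b i)"
    using insert by auto
  have S0: "(\<Sum>i\<in>F. \<alpha> i * b i) \<ge> 0"
  proof (rule sum_nonneg)
    fix i assume i: "i \<in> F"
    have "b i \<in> {0, 1}" "\<alpha> i \<ge> 0" using insert.prems i by auto
    then show "0 \<le> \<alpha> i * b i" by auto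
  qed
  have ak: "\<alpha> k \<ge> 0" using insert.prems by auto
  have "b k = 0 \<or> b k = 1" using insert.prems by auto
  then show ?case
  proof
    assume "b k = 0" then show ?thesis using insert IH by simp
  next
    assume bk: "b k = 1"
    have "\<phi> (\<alpha> k) + \<phi> (\<Sum>i\<in>F. \<alpha> i * b i) \<le> \<phi> 0 + \<phi> (\<alpha> k + (\<Sum>i\<in>F. \<alpha> i * b i))"
      by (rule superadd[OF conv ak S0])
    then show ?thesis using insert IH bk by (simp add: algebra_simps)
  qed
qed

lemma (in prob_space) int_01:
  assumes Z: "Z \<in> borel_measurable M" and Z01: "\<And>x. x \<in> space M \<Longrightarrow> Z x \<in> {0, 1}"
  shows "integrable M Z" and "integral\<^sup>L M Z = prob {x \<in> space M. Z x = 1}"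
proof -
  have ev: "{x \<in> space M. Z x = 1} \<in> events" using Z by measurable
  have eq: "\<And>x. x \<in> space M \<Longrightarrow> Z x = indicator {x \<in> space M. Z x = 1} x"
    by (auto simp: indicator_def dest!: Z01)
  have "integrable M (indicator {x \<in> space M. Z x = 1} :: 'a \<Rightarrow> real)"
    using ev by (intro integrable_real_indicator) (auto simp: emeasure_eq_measure)
  moreover have "integrable M Z \<longleftrightarrow> integrable M (indicator {x \<in> space M. Z x = 1} :: 'a \<Rightarrow> real)"
    by (rule Bochner_Integration.integrable_cong) (auto intro: eq)
  ultimately show "integrable M Z" by simp
  have "integral\<^sup>L M Z = integral\<^sup>L M (indicator {x \<in> space M. Z x = 1} :: 'a \<Rightarrow> real)"
    by (rule Bochner_Integration.integral_cong[OF refl eq])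
  also have "\<dots> = prob {x \<in> space M. Z x = 1}" using ev by simp
  finally show "integral\<^sup>L M Z = prob {x \<in> space M. Z x = 1}" .
qed

lemma single_sum:
  fixes f :: "nat \<Rightarrow> 'c::{comm_monoid_add}"
  assumes "finite I" "i \<in> I" "\<And>j. j \<in> I \<Longrightarrow> j \<noteq> i \<Longrightarrow> f j = 0"
  shows "(\<Sum>j\<in>I. f j) = f i"
  using assms by (subst sum.remove[of I i]) (auto intro!: sum.neutral)

lemma poisW:
  assumes nn: "\<And>x. x \<ge> 0 \<Longrightarrow> \<psi> x \<ge> 0" and x: "x \<ge> 0"
  shows "(\<Sum>m. ennreal (poi 1 m * \<psi> (real m * x))) = ennreal (exp (-1) * \<psi> 0) + W \<psi> 1 x"
proof -
  have "(\<Sum>m. ennreal (poi 1 m * \<psi> (real m * x))) = (\<Sum>m. ennreal (if m = 0 then exp (-1) * \<psi> 0 else 0) + ennreal (cc 1 m * \<psi> (real m * x)))"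
  proof (intro suminf_cong)
    fix m show "ennreal (poi 1 m * \<psi> (real m * x)) = ennreal (if m = 0 then exp (-1) * \<psi> 0 else 0) + ennreal (cc 1 m * \<psi> (real m * x))"
      by (cases "m = 0") (auto simp: poi_def cc_def)
  qed
  also have "\<dots> = (\<Sum>m. ennreal (if m = 0 then exp (-1) * \<psi> 0 else 0)) + W \<psi> 1 x"
    unfolding W_def by (subst suminf_add[symmetric]) auto
  also have "(\<Sum>m. ennreal (if m = 0 then exp (-1) * \<psi> 0 else 0)) = ennreal (exp (-1) * \<psi> 0)"
    by (subst suminf_finite[of "{0}"]) auto
  finally show ?thesis .
qed


lemma (in prob_space) lin01:
  assumes fin: "finite I" and Zm: "\<And>i. i \<in> I \<Longrightarrow> Z i \<in> borel_measurable M"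
    and Z01: "\<And>i x. i \<in> I \<Longrightarrow> x \<in> space M \<Longrightarrow> Z i x \<in> {0, 1}"
  shows "integrable M (\<lambda>x. c + (\<Sum>i\<in>I. d i * Z i x))"
    and "(\<integral>x. c + (\<Sum>i\<in>I. d i * Z i x) \<partial>M) = c + (\<Sum>i\<in>I. d i * prob {x \<in> space M. Z i x = 1})"
proof -
  have iZ: "\<And>i. i \<in> I \<Longrightarrow> integrable M (Z i)" using int_01(1)[OF Zm Z01] by blast
  have eZ: "\<And>i. i \<in> I \<Longrightarrow> integral\<^sup>L M (Z i) = prob {x \<in> space M. Z i x = 1}" using int_01(2)[OF Zm Z01] by blast
  have isum: "integrable M (\<lambda>x. \<Sum>i\<in>I. d i * Z i x)" using iZ by auto
  then show "integrable M (\<lambda>x. c + (\<Sum>i\<in>I. d i * Z i x))" by auto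
  have "(\<integral>x. c + (\<Sum>i\<in>I. d i * Z i x) \<partial>M) = c + (\<integral>x. (\<Sum>i\<in>I. d i * Z i x) \<partial>M)"
    using isum by (simp add: prob_space)
  also have "(\<integral>x. (\<Sum>i\<in>I. d i * Z i x) \<partial>M) = (\<Sum>i\<in>I. \<integral>x. d i * Z i x \<partial>M)"
    by (rule Bochner_Integration.integral_sum) (use iZ in auto)
  also have "\<dots> = (\<Sum>i\<in>I. d i * prob {x \<in> space M. Z i x = 1})"
    by (intro sum.cong refl) (simp add: eZ)
  finally show "(\<integral>x. c + (\<Sum>i\<in>I. d i * Z i x) \<partial>M) = c + (\<Sum>i\<in>I. d i * prob {x \<in> space M. Z i x = 1})" .
qed

theorem lemma6:
  fixes M :: "'a measure" and N :: "'b measure"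
    and n :: nat and chi :: "nat \<Rightarrow> 'a \<Rightarrow> real" and B :: "nat \<Rightarrow> 'b \<Rightarrow> real"
    and P :: "'a \<Rightarrow> nat" and \<alpha> :: "nat \<Rightarrow> real"
  assumes "prob_space M" and "prob_space N"
    and chi_rv: "\<And>i. i \<in> {1..n} \<Longrightarrow> chi i \<in> borel_measurable M"
    and chi_bern: "\<And>i x. i \<in> {1..n} \<Longrightarrow> x \<in> space M \<Longrightarrow> chi i x \<in> {0, 1}"
    and chi_sum: "(\<Sum>i=1..n. measure M {x \<in> space M. chi i x = 1}) = 1"
    and chi_excl: "\<And>i j. i \<in> {1..n} \<Longrightarrow> j \<in> {1..n} \<Longrightarrow> i \<noteq> j \<Longrightarrow>
                  {x \<in> space M. chi i x = 1} \<inter> {x \<in> space M. chi j x = 1} = {}"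
    and B_rv: "\<And>i. i \<in> {1..n} \<Longrightarrow> B i \<in> borel_measurable N"
    and B_bern: "\<And>i y. i \<in> {1..n} \<Longrightarrow> y \<in> space N \<Longrightarrow> B i y \<in> {0, 1}"
    and B_indep: "prob_space.indep_vars N (\<lambda>_. borel) B {1..n}"
    and B_prob: "\<And>i. i \<in> {1..n} \<Longrightarrow>
                   measure N {y \<in> space N. B i y = 1} = measure M {x \<in> space M. chi i x = 1}"
    and P_rv: "P \<in> measurable M (count_space UNIV)"
    and P_poisson: "distr M (count_space UNIV) P = measure_pmf (poisson_pmf 1)"
    and P_indep: "prob_space.indep_set M
                    (sigma_sets (space M) {P -` A \<inter> space M | A. A \<in> sets (count_space UNIV)})
                    (sigma_sets (space M) {(\<lambda>x. \<lambda>i\<in>{1..n}. chi i x) -` A \<inter> space M | A.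
                                         A \<in> sets (Pi\<^sub>M {1..n} (\<lambda>_. borel :: real measure))})"
    and \<alpha>_nonneg: "\<And>i. i \<in> {1..n} \<Longrightarrow> \<alpha> i \<ge> 0"
  shows "cx_le M (\<lambda>x. \<Sum>i=1..n. \<alpha> i * chi i x) N (\<lambda>y. \<Sum>i=1..n. \<alpha> i * B i y)
       \<and> cx_le N (\<lambda>y. \<Sum>i=1..n. \<alpha> i * B i y) M (\<lambda>x. real (P x) * (\<Sum>i=1..n. \<alpha> i * chi i x))"
proof -
  interpret M: prob_space M by fact
  interpret N: prob_space N by fact
  define p where "p i = measure M {x \<in> space M. chi i x = 1}" for i
  have p0: "\<And>i. p i \<ge> 0" by (simp add: p_def)
  have psum: "(\<Sum>i=1..n. p i) = 1" using chi_sum by (simp add: p_def)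
  have pB: "\<And>i. i \<in> {1..n} \<Longrightarrow> p i = measure N {y \<in> space N. B i y = 1}" using B_prob by (simp add: p_def)
  define X where "X = (\<lambda>x. \<Sum>i=1..n. \<alpha> i * chi i x)"
  define Y where "Y = (\<lambda>y. \<Sum>i=1..n. \<alpha> i * B i y)"
  define R where "R = (\<lambda>x. real (P x) * (\<Sum>i=1..n. \<alpha> i * chi i x))"
  have excl: "chi j x = 0" if "x \<in> space M" "i \<in> {1..n}" "j \<in> {1..n}" "i \<noteq> j" "chi i x = 1" for x i j
  proof -
    have "chi j x \<noteq> 1" using chi_excl[OF that(2,3,4)] that(1,5) by blast
    then show ?thesis using chi_bern[OF that(3,1)] by auto
  qed
  have dich: "(\<forall>i\<in>{1..n}. chi i x = 0) \<or> (\<exists>i\<in>{1..n}. chi i x = 1 \<and> (\<forall>j\<in>{1..n}. j \<noteq> i \<longrightarrow> chi j x = 0))"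
    if x: "x \<in> space M" for x
  proof (cases "\<exists>i\<in>{1..n}. chi i x = 1")
    case True then show ?thesis using excl[OF x] by blast
  next
    case False then show ?thesis using chi_bern[OF _ x] by blast
  qed
  have Pr: "(\<lambda>x. real (P x)) \<in> borel_measurable M"
    by (rule measurable_compose[OF P_rv]) simp
  have X_m: "X \<in> borel_measurable M" unfolding X_def
    by (intro borel_measurable_sum borel_measurable_times borel_measurable_const chi_rv) auto
  have Y_m: "Y \<in> borel_measurable N" unfolding Y_def
    by (intro borel_measurable_sum borel_measurable_times borel_measurable_const B_rv) auto
  have R_m: "R \<in> borel_measurable M"
    using Pr X_m unfolding R_def X_def by (rule borel_measurable_times)
  have chi0: "\<And>i x. i \<in> {1..n} \<Longrightarrow> x \<in> space M \<Longrightarrow> chi i x \<ge> 0" using chi_bern by fastforce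
  have B0: "\<And>i y. i \<in> {1..n} \<Longrightarrow> y \<in> space N \<Longrightarrow> B i y \<ge> 0" using B_bern by fastforce
  have X0: "\<And>x. x \<in> space M \<Longrightarrow> X x \<ge> 0"
    unfolding X_def using chi0 \<alpha>_nonneg by (auto intro!: sum_nonneg)
  have Y0: "\<And>y. y \<in> space N \<Longrightarrow> Y y \<ge> 0"
    unfolding Y_def using B0 \<alpha>_nonneg by (auto intro!: sum_nonneg)
  have R0: "\<And>x. x \<in> space M \<Longrightarrow> R x \<ge> 0"
    using X0 unfolding R_def X_def by simp

  have part1: "cx_le M X N Y"
    unfolding cx_le_def
  proof (intro allI impI)
    fix \<phi> :: "real \<Rightarrow> real"
    assume conv: "convex_on UNIV \<phi>" and int1: "integrable M (\<lambda>x. \<phi> (X x))" and int2: "integrable N (\<lambda>y. \<phi> (Y y))"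
    have conv0: "convex_on {0..} \<phi>" by (rule convex_on_subset[OF conv]) auto
    have eX: "\<phi> (X x) = \<phi> 0 + (\<Sum>i\<in>{1..n}. (\<phi> (\<alpha> i) - \<phi> 0) * chi i x)" if x: "x \<in> space M" for x
      using dich[OF x]
    proof
      assume "\<forall>i\<in>{1..n}. chi i x = 0" then show ?thesis by (simp add: X_def)
    next
      assume "\<exists>i\<in>{1..n}. chi i x = 1 \<and> (\<forall>j\<in>{1..n}. j \<noteq> i \<longrightarrow> chi j x = 0)"
      then obtain i where i: "i \<in> {1..n}" "chi i x = 1" "\<forall>j\<in>{1..n}. j \<noteq> i \<longrightarrow> chi j x = 0" by blast
      have "X x = \<alpha> i * chi i x" unfolding X_def by (rule single_sum) (use i in auto)
      moreover have "(\<Sum>j\<in>{1..n}. (\<phi> (\<alpha> j) - \<phi> 0) * chi j x) = (\<phi> (\<alpha> i) - \<phi> 0) * chi i x"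
        by (rule single_sum) (use i in auto)
      ultimately show ?thesis using i by simp
    qed
    have eY: "\<phi> 0 + (\<Sum>i\<in>{1..n}. (\<phi> (\<alpha> i) - \<phi> 0) * B i y) \<le> \<phi> (Y y)" if y: "y \<in> space N" for y
    proof -
      have "(\<Sum>i\<in>{1..n}. B i y * \<phi> (\<alpha> i)) + (1 - (\<Sum>i\<in>{1..n}. B i y)) * \<phi> 0 \<le> \<phi> (\<Sum>i\<in>{1..n}. \<alpha> i * B i y)"
        by (rule superadd_sum[OF conv0]) (use B_bern[OF _ y] \<alpha>_nonneg in auto)
      moreover have "(\<Sum>i\<in>{1..n}. B i y * \<phi> (\<alpha> i)) + (1 - (\<Sum>i\<in>{1..n}. B i y)) * \<phi> 0
          = \<phi> 0 + (\<Sum>i\<in>{1..n}. (\<phi> (\<alpha> i) - \<phi> 0) * B i y)"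
        by (simp add: algebra_simps sum_subtractf sum_distrib_left sum_distrib_right)
      ultimately show ?thesis by (simp add: Y_def)
    qed
    have "(\<integral>x. \<phi> (X x) \<partial>M) = (\<integral>x. \<phi> 0 + (\<Sum>i\<in>{1..n}. (\<phi> (\<alpha> i) - \<phi> 0) * chi i x) \<partial>M)"
      by (rule Bochner_Integration.integral_cong[OF refl eX])
    also have "\<dots> = \<phi> 0 + (\<Sum>i\<in>{1..n}. (\<phi> (\<alpha> i) - \<phi> 0) * p i)"
      unfolding p_def by (rule M.lin01(2)) (use chi_rv chi_bern in auto)
    also have "\<dots> = (\<integral>y. \<phi> 0 + (\<Sum>i\<in>{1..n}. (\<phi> (\<alpha> i) - \<phi> 0) * B i y) \<partial>N)"
      using pB by (subst N.lin01(2)) (use B_rv B_bern in auto)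
    also have "\<dots> \<le> (\<integral>y. \<phi> (Y y) \<partial>N)"
      by (rule integral_mono[OF _ int2 eY]) (rule N.lin01(1), use B_rv B_bern in auto)
    finally show "(\<integral>x. \<phi> (X x) \<partial>M) \<le> (\<integral>y. \<phi> (Y y) \<partial>N)" .
  qed

  have part2: "cx_le N Y M R"
    unfolding cx_le_def
  proof (intro allI impI)
    fix \<phi> :: "real \<Rightarrow> real"
    assume conv: "convex_on UNIV \<phi>" and int1: "integrable N (\<lambda>y. \<phi> (Y y))" and int2: "integrable M (\<lambda>x. \<phi> (R x))"
    define c where "c = \<phi> 0 - \<phi> (-1)"
    define \<psi> where "\<psi> x = \<phi> x - \<phi> 0 - c * x" for x
    have convp: "convex_on UNIV \<psi>"
    proof -
      have cv: "\<phi> (u * x + v * y) \<le> u * \<phi> x + v * \<phi> y" if "u \<ge> 0" "v \<ge> 0" "u + v = 1" for x y u v :: real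
        using conv that unfolding convex_on_def by auto
      show ?thesis unfolding convex_on_def
      proof (intro conjI ballI allI impI)
        fix x y u v :: real assume uv: "0 \<le> u" "0 \<le> v" "u + v = 1"
        have "\<psi> (u *\<^sub>R x + v *\<^sub>R y) = \<phi> (u * x + v * y) - \<phi> 0 - c * (u * x + v * y)" by (simp add: \<psi>_def)
        also have "\<dots> \<le> u * \<phi> x + v * \<phi> y - (u + v) * \<phi> 0 - c * (u * x + v * y)" using cv[OF uv] uv(3) by simp
        also have "\<dots> = u * \<psi> x + v * \<psi> y" by (simp add: \<psi>_def algebra_simps)
        finally show "\<psi> (u *\<^sub>R x + v *\<^sub>R y) \<le> u * \<psi> x + v * \<psi> y" .
      qed auto
    qed
    have nnp: "\<psi> x \<ge> 0" if x: "x \<ge> 0" for x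
    proof -
      have cv: "\<phi> ((1 - t) * a + t * b) \<le> (1 - t) * \<phi> a + t * \<phi> b" if "0 \<le> t" "t \<le> 1" for a b t :: real
        using convex_onD[OF conv that] by simp
      define t where "t = 1 / (1 + x)"
      have t: "0 \<le> t" "t \<le> 1" using x by (auto simp: t_def)
      have "(1 - t) * (-1) + t * x = 0" using x by (simp add: t_def field_simps)
      then have "\<phi> 0 \<le> (1 - t) * \<phi> (-1) + t * \<phi> x" using cv[OF t, of "-1" x] by simp
      then have "(1 + x) * \<phi> 0 \<le> (1 + x) * ((1 - t) * \<phi> (-1) + t * \<phi> x)" using x by (intro mult_left_mono) auto
      also have "\<dots> = ((1 + x) * (1 - t)) * \<phi> (-1) + ((1 + x) * t) * \<phi> x" by (simp add: algebra_simps)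
      also have "(1 + x) * t = 1" using x by (simp add: t_def)
      also have "(1 + x) * (1 - t) = x" using x by (simp add: t_def field_simps)
      also have "x * \<phi> (-1) + 1 * \<phi> x = x * \<phi> (-1) + \<phi> x" by simp
      finally have h: "(1 + x) * \<phi> 0 \<le> x * \<phi> (-1) + \<phi> x" .
      have "\<psi> x = (x * \<phi> (-1) + \<phi> x) - (1 + x) * \<phi> 0" by (simp add: \<psi>_def c_def algebra_simps)
      with h show ?thesis by simp
    qed
    have psim: "\<psi> \<in> borel_measurable borel" by (rule convex_meas[OF convp])
    have nnp': "\<forall>x\<ge>0. 0 \<le> \<psi> x" using nnp by auto
    have c1: "(\<integral>\<^sup>+y. ennreal (\<psi> (Y y)) \<partial>N) \<le> ennreal (exp (-1) * \<psi> 0) + (\<Sum>j=1..n. ennreal (p j) * W \<psi> 1 (\<alpha> j))"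
    proof -
      have "\<forall>\<psi>. convex_on UNIV \<psi> \<longrightarrow> (\<forall>x\<ge>0. 0 \<le> \<psi> x) \<longrightarrow>
         (\<integral>\<^sup>+y. ennreal (\<psi> (\<Sum>i=1..n. \<alpha> i * B i y)) \<partial>N)
           \<le> ennreal (exp (- (\<Sum>j=1..n. p j)) * \<psi> 0) + (\<Sum>j=1..n. ennreal (p j) * W \<psi> (\<Sum>j=1..n. p j) (\<alpha> j))"
        by (rule core_lhs[OF \<open>prob_space N\<close> B_rv B_bern B_indep \<alpha>_nonneg pB order.refl])
      then show ?thesis using convp nnp' unfolding psum Y_def by blast
    qed
    define V where "V = (\<lambda>x. \<lambda>i\<in>{1..n}. chi i x)"
    have V_m: "V \<in> measurable M (Pi\<^sub>M {1..n} (\<lambda>_. borel))" unfolding V_def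
      by (rule measurable_restrict) (rule chi_rv)
    have indPchi: "M.indep_var borel (\<lambda>x. g (P x)) borel (chi i)" if i: "i \<in> {1..n}" for i and g :: "nat \<Rightarrow> real"
    proof -
      have rv1: "(\<lambda>x. g (P x)) \<in> borel_measurable M" by (rule measurable_compose[OF P_rv]) simp
      have sub1: "{(\<lambda>x. g (P x)) -` A \<inter> space M | A. A \<in> sets borel} \<subseteq> {P -` A \<inter> space M | A. A \<in> sets (count_space UNIV)}"
      proof clarify
        fix A :: "real set"
        have "(\<lambda>x. g (P x)) -` A \<inter> space M = P -` (g -` A) \<inter> space M" by auto
        then show "\<exists>A'. (\<lambda>x. g (P x)) -` A \<inter> space M = P -` A' \<inter> space M \<and> A' \<in> sets (count_space UNIV)"
          by (intro exI[of _ "g -` A"] conjI) auto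
      qed
      have sub2: "{chi i -` A \<inter> space M | A. A \<in> sets borel} \<subseteq> {V -` A \<inter> space M | A. A \<in> sets (Pi\<^sub>M {1..n} (\<lambda>_. borel :: real measure))}"
      proof clarify
        fix A :: "real set" assume A: "A \<in> sets borel"
        define C where "C = (\<lambda>v. v i) -` A \<inter> space (Pi\<^sub>M {1..n} (\<lambda>_. borel :: real measure))"
        have C: "C \<in> sets (Pi\<^sub>M {1..n} (\<lambda>_. borel :: real measure))"
          unfolding C_def by (rule measurable_sets[OF measurable_component_singleton[OF i] A])
        have "chi i -` A \<inter> space M = V -` C \<inter> space M"
          using measurable_space[OF V_m] i by (auto simp: C_def V_def)
        with C show "\<exists>A'. chi i -` A \<inter> space M = V -` A' \<inter> space M \<and> A' \<in> sets (Pi\<^sub>M {1..n} (\<lambda>_. borel :: real measure))"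
          by (intro exI[of _ C] conjI)
      qed
      have "M.indep_set (sigma_sets (space M) {(\<lambda>x. g (P x)) -` A \<inter> space M | A. A \<in> sets borel})
                        (sigma_sets (space M) {chi i -` A \<inter> space M | A. A \<in> sets borel})"
        using P_indep unfolding M.indep_set_def V_def[symmetric]
        apply (rule M.indep_sets_mono_sets)
        subgoal for b by (cases b) (simp_all only: bool.case sigma_sets_subseteq[OF sub1] sigma_sets_subseteq[OF sub2])
        done
      then show ?thesis unfolding M.indep_var_eq using rv1 chi_rv[OF i] by simp
    qed
    have tmI: "(\<integral>\<^sup>+x. ennreal (g (P x) * chi i x) \<partial>M) = (\<Sum>m. ennreal (poi 1 m * g m)) * ennreal (p i)"
      if i: "i \<in> {1..n}" and g: "\<And>m. g m \<ge> 0" for i g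
    proof -
      have "(\<integral>\<^sup>+x. ennreal (g (P x) * chi i x) \<partial>M) = (\<integral>\<^sup>+x. ennreal (g (P x)) \<partial>M) * (\<integral>\<^sup>+x. ennreal (chi i x) \<partial>M)"
        by (rule M.indep_var_nn_mult[OF indPchi[OF i, of g], where f="\<lambda>r. r" and g="\<lambda>r. r", simplified])
           (use g i chi0 in auto)
      also have "(\<integral>\<^sup>+x. ennreal (chi i x) \<partial>M) = ennreal (p i)"
        using M.nn_01(1)[OF chi_rv[OF i] chi_bern[OF i]] by (simp add: p_def)
      also have "(\<integral>\<^sup>+x. ennreal (g (P x)) \<partial>M) = (\<Sum>m. ennreal (poi 1 m * g m))"
        by (rule poisson_nn[OF P_rv P_poisson g])
      finally show ?thesis .
    qed
    have c2: "ennreal (exp (-1) * \<psi> 0) + (\<Sum>j=1..n. ennreal (p j) * W \<psi> 1 (\<alpha> j)) \<le> (\<integral>\<^sup>+x. ennreal (\<psi> (R x)) \<partial>M)"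
    proof -
      have pt: "(\<Sum>i\<in>{1..n}. ennreal (\<psi> (real (P x) * \<alpha> i) * chi i x)) \<le> ennreal (\<psi> (R x))" if x: "x \<in> space M" for x
        using dich[OF x]
      proof
        assume "\<forall>i\<in>{1..n}. chi i x = 0" then show ?thesis by simp
      next
        assume "\<exists>i\<in>{1..n}. chi i x = 1 \<and> (\<forall>j\<in>{1..n}. j \<noteq> i \<longrightarrow> chi j x = 0)"
        then obtain i where i: "i \<in> {1..n}" "chi i x = 1" "\<forall>j\<in>{1..n}. j \<noteq> i \<longrightarrow> chi j x = 0" by blast
        have "(\<Sum>j\<in>{1..n}. \<alpha> j * chi j x) = \<alpha> i * chi i x" by (rule single_sum) (use i in auto)
        then have "R x = real (P x) * \<alpha> i" using i by (simp add: R_def)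
        moreover have "(\<Sum>j\<in>{1..n}. ennreal (\<psi> (real (P x) * \<alpha> j) * chi j x)) = ennreal (\<psi> (real (P x) * \<alpha> i) * chi i x)"
          by (rule single_sum) (use i in auto)
        ultimately show ?thesis using i by simp
      qed
      have "ennreal (exp (-1) * \<psi> 0) + (\<Sum>j=1..n. ennreal (p j) * W \<psi> 1 (\<alpha> j))
          = ennreal (exp (-1) * \<psi> 0) * (\<Sum>i\<in>{1..n}. ennreal (p i)) + (\<Sum>j=1..n. ennreal (p j) * W \<psi> 1 (\<alpha> j))"
      proof -
        have "(\<Sum>i\<in>{1..n}. ennreal (p i)) = 1" using psum p0 by (subst sum_ennreal) auto
        then show ?thesis by simp
      qed
      also have "\<dots> = (\<Sum>i\<in>{1..n}. (ennreal (exp (-1) * \<psi> 0) + W \<psi> 1 (\<alpha> i)) * ennreal (p i))"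
        by (simp add: distrib_right distrib_left sum.distrib sum_distrib_left mult.commute)
      also have "\<dots> = (\<Sum>i\<in>{1..n}. (\<Sum>m. ennreal (poi 1 m * \<psi> (real m * \<alpha> i))) * ennreal (p i))"
        by (intro sum.cong refl) (subst poisW[OF nnp \<alpha>_nonneg], auto)
      also have "\<dots> = (\<Sum>i\<in>{1..n}. \<integral>\<^sup>+x. ennreal (\<psi> (real (P x) * \<alpha> i) * chi i x) \<partial>M)"
        by (intro sum.cong refl tmI[symmetric]) (use nnp \<alpha>_nonneg in auto)
      also have "\<dots> = (\<integral>\<^sup>+x. (\<Sum>i\<in>{1..n}. ennreal (\<psi> (real (P x) * \<alpha> i) * chi i x)) \<partial>M)"
        by (rule nn_integral_sum[symmetric]) (use psim Pr chi_rv in auto)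
      also have "\<dots> \<le> (\<integral>\<^sup>+x. ennreal (\<psi> (R x)) \<partial>M)"
        by (rule nn_integral_mono) (rule pt)
      finally show ?thesis .
    qed
    have EP: "(\<Sum>m. ennreal (poi 1 m * real m)) = ennreal 1"
      by (rule suminf_ennreal_eq[OF _ poi_m_sums]) (simp add: poi_nonneg)
    have sp0: "(\<Sum>i=1..n. \<alpha> i * p i) \<ge> 0" using \<alpha>_nonneg p0 by (auto intro!: sum_nonneg)
    have mY: "(\<integral>\<^sup>+y. ennreal (Y y) \<partial>N) = ennreal (\<Sum>i=1..n. \<alpha> i * p i)"
    proof -
      have "(\<integral>\<^sup>+y. ennreal (Y y) \<partial>N) = (\<integral>\<^sup>+y. (\<Sum>i\<in>{1..n}. ennreal (\<alpha> i) * ennreal (B i y)) \<partial>N)"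
      proof (rule nn_integral_cong)
        fix y assume y: "y \<in> space N"
        have "ennreal (Y y) = (\<Sum>i\<in>{1..n}. ennreal (\<alpha> i * B i y))"
          unfolding Y_def using \<alpha>_nonneg B0[OF _ y] by (subst sum_ennreal) auto
        also have "\<dots> = (\<Sum>i\<in>{1..n}. ennreal (\<alpha> i) * ennreal (B i y))"
          using \<alpha>_nonneg by (intro sum.cong refl) (simp add: ennreal_mult')
        finally show "ennreal (Y y) = (\<Sum>i\<in>{1..n}. ennreal (\<alpha> i) * ennreal (B i y))" .
      qed
      also have "\<dots> = (\<Sum>i\<in>{1..n}. ennreal (\<alpha> i) * (\<integral>\<^sup>+y. ennreal (B i y) \<partial>N))"
        using B_rv by (subst nn_integral_sum) (auto intro!: sum.cong nn_integral_cmult borel_measurable_times_ennreal)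
      also have "\<dots> = (\<Sum>i\<in>{1..n}. ennreal (\<alpha> i) * ennreal (p i))"
        by (intro sum.cong refl) (use N.nn_01(1)[OF B_rv B_bern] pB in auto)
      also have "\<dots> = ennreal (\<Sum>i=1..n. \<alpha> i * p i)"
        using \<alpha>_nonneg p0 by (subst sum_ennreal[symmetric]) (auto intro!: sum.cong simp: ennreal_mult')
      finally show ?thesis .
    qed
    have mR: "(\<integral>\<^sup>+x. ennreal (R x) \<partial>M) = ennreal (\<Sum>i=1..n. \<alpha> i * p i)"
    proof -
      have "(\<integral>\<^sup>+x. ennreal (R x) \<partial>M) = (\<integral>\<^sup>+x. (\<Sum>i\<in>{1..n}. ennreal (\<alpha> i) * ennreal (real (P x) * chi i x)) \<partial>M)"
      proof (rule nn_integral_cong)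
        fix x assume x: "x \<in> space M"
        have "ennreal (R x) = (\<Sum>i\<in>{1..n}. ennreal (\<alpha> i * (real (P x) * chi i x)))"
          unfolding R_def using \<alpha>_nonneg chi0[OF _ x]
          by (subst sum_ennreal) (auto simp: sum_distrib_left algebra_simps)
        also have "\<dots> = (\<Sum>i\<in>{1..n}. ennreal (\<alpha> i) * ennreal (real (P x) * chi i x))"
          using \<alpha>_nonneg by (intro sum.cong refl) (simp add: ennreal_mult')
        finally show "ennreal (R x) = (\<Sum>i\<in>{1..n}. ennreal (\<alpha> i) * ennreal (real (P x) * chi i x))" .
      qed
      also have "\<dots> = (\<Sum>i\<in>{1..n}. ennreal (\<alpha> i) * (\<integral>\<^sup>+x. ennreal (real (P x) * chi i x) \<partial>M))"
        using chi_rv Pr by (subst nn_integral_sum) (auto intro!: sum.cong nn_integral_cmult borel_measurable_times_ennreal borel_measurable_times)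
      also have "\<dots> = (\<Sum>i\<in>{1..n}. ennreal (\<alpha> i) * ennreal (p i))"
        by (intro sum.cong refl) (simp add: tmI EP)
      also have "\<dots> = ennreal (\<Sum>i=1..n. \<alpha> i * p i)"
        using \<alpha>_nonneg p0 by (subst sum_ennreal[symmetric]) (auto intro!: sum.cong simp: ennreal_mult')
      finally show ?thesis .
    qed
    have intY: "integrable N Y"
      by (rule integrableI_nonneg) (use Y_m Y0 mY in \<open>auto intro!: AE_I2\<close>)
    have EY: "(\<integral>y. Y y \<partial>N) = (\<Sum>i=1..n. \<alpha> i * p i)"
      using integral_eq_nn_integral[OF Y_m] Y0 mY sp0 by (simp add: AE_I2)
    have intR: "integrable M R"
      by (rule integrableI_nonneg) (use R_m R0 mR in \<open>auto intro!: AE_I2\<close>)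
    have ER: "(\<integral>x. R x \<partial>M) = (\<Sum>i=1..n. \<alpha> i * p i)"
      using integral_eq_nn_integral[OF R_m] R0 mR sp0 by (simp add: AE_I2)
    have ipY: "integrable N (\<lambda>y. \<psi> (Y y))" unfolding \<psi>_def using int1 intY by auto
    have ipR: "integrable M (\<lambda>x. \<psi> (R x))" unfolding \<psi>_def using int2 intR by auto
    have IpY: "(\<integral>y. \<psi> (Y y) \<partial>N) = (\<integral>y. \<phi> (Y y) \<partial>N) - \<phi> 0 - c * (\<integral>y. Y y \<partial>N)"
      unfolding \<psi>_def using int1 intY by (simp add: N.prob_space)
    have IpR: "(\<integral>x. \<psi> (R x) \<partial>M) = (\<integral>x. \<phi> (R x) \<partial>M) - \<phi> 0 - c * (\<integral>x. R x \<partial>M)"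
      unfolding \<psi>_def using int2 intR by (simp add: M.prob_space)
    have nY: "(\<integral>\<^sup>+y. ennreal (\<psi> (Y y)) \<partial>N) = ennreal (\<integral>y. \<psi> (Y y) \<partial>N)"
      by (rule nn_integral_eq_integral[OF ipY]) (use Y0 nnp in \<open>auto intro!: AE_I2\<close>)
    have nR: "(\<integral>\<^sup>+x. ennreal (\<psi> (R x)) \<partial>M) = ennreal (\<integral>x. \<psi> (R x) \<partial>M)"
      by (rule nn_integral_eq_integral[OF ipR]) (use R0 nnp in \<open>auto intro!: AE_I2\<close>)
    have "ennreal (\<integral>y. \<psi> (Y y) \<partial>N) \<le> ennreal (\<integral>x. \<psi> (R x) \<partial>M)"
      using c1 c2 nY nR by simp
    moreover have "(\<integral>x. \<psi> (R x) \<partial>M) \<ge> 0"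
      by (rule integral_nonneg_AE) (use R0 nnp in \<open>auto intro!: AE_I2\<close>)
    ultimately have "(\<integral>y. \<psi> (Y y) \<partial>N) \<le> (\<integral>x. \<psi> (R x) \<partial>M)" by simp
    then show "(\<integral>y. \<phi> (Y y) \<partial>N) \<le> (\<integral>x. \<phi> (R x) \<partial>M)"
      using IpY IpR EY ER by simp
  qed

  show ?thesis using part1 part2 by (simp add: X_def Y_def R_def)
qed


end
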